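(* For integers $d\geqslant 0$ and real $x>0$ with $0\leqslant d\leqslant x$, $$\sum_{K_d-d<k\leqslant K_d}k^3=x\big(d^2\sqrt{dx}+O(d^{7/2}x^{-1/2})+O(d^2)\big),$$ where $k$ runs over integers, $K_d=K_d(x)$, and the implied constants are absolute.
   Context: For an integer $d\geqslant 0$ and real $x>0$, $K_d(x)=\big\lfloor \big(d+\sqrt{d^2+4dx}\,\big)/2\big\rfloor$, where $\lfloor\cdot\rfloor$ is the integer part. *)

theory Defs
  imports Complex_Main
begin

definition K :: "nat \<Rightarrow> real \<Rightarrow> int" where
  "K d x = \<lfloor>(real d + sqrt ((real d)\<^sup>2 + 4 * real d * x)) / 2\<rfloor>"

end

theory Submission
  imports Defs
begin

lemma sum_cubes:
  "(\<Sum>k\<in>{c<..c+int n}. (real_of_int k)^3) =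
     real n * (real_of_int c + (real n + 1)/2)^3
     + (real_of_int c + (real n+1)/2) * real n * ((real n)^2 - 1)/4"
proof (induction n)
  case 0
  then show ?case by simp
next
  case (Suc n)
  have e: "{c<..c + int (Suc n)} = insert (c + int n + 1) {c<..c+int n}" by auto
  have "(\<Sum>k\<in>{c<..c + int (Suc n)}. (real_of_int k)^3)
        = (real_of_int c + real n + 1)^3 + (\<Sum>k\<in>{c<..c+int n}. (real_of_int k)^3)"
    unfolding e by (subst sum.insert) auto
  also have "\<dots> = real (Suc n) * (real_of_int c + (real (Suc n) + 1)/2)^3
     + (real_of_int c + (real (Suc n)+1)/2) * real (Suc n) * ((real (Suc n))^2 - 1)/4"
    unfolding Suc.IH by (simp add: field_simps power3_eq_cube power2_eq_square)
  finally show ?case .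
qed

lemma rhs_eq:
  assumes "x > 0"
  shows "x * (C1 * real d powr (7/2) * x powr (-1/2) + C2 * (real d)\<^sup>2)
        = C1 * (real d)^3 * sqrt (real d * x) + C2 * (real d)^2 * x"
proof -
  have a: "real d powr (7/2) = (real d)^3 * sqrt (real d)"
  proof (cases "d = 0")
    case False
    then have p: "real d > 0" by simp
    have "real d powr (7/2) = real d powr (3 + 1/2)" by simp
    also have "\<dots> = real d powr 3 * real d powr (1/2)" using p by (simp only: powr_add)
    also have "\<dots> = (real d)^3 * sqrt (real d)"
      using p powr_realpow[OF p, of 3] by (simp add: powr_half_sqrt)
    finally show ?thesis .
  qed simp
  have b: "x * x powr (-1/2) = sqrt x"
  proof -
    have "x * x powr (-1/2) = x powr 1 * x powr (-1/2)" using assms by simp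
    also have "\<dots> = x powr (1 + (-1/2))" by (simp only: powr_add)
    also have "\<dots> = x powr (1/2)" by simp
    finally show ?thesis using assms by (simp add: powr_half_sqrt)
  qed
  show ?thesis
    by (simp add: algebra_simps a real_sqrt_mult flip: b)
qed

theorem proposition3:
  shows "\<exists>C1 C2. \<forall>(d::nat) (x::real). 0 < x \<longrightarrow> real d \<le> x \<longrightarrow>
     \<bar>(\<Sum>k\<in>{K d x - int d<..K d x}. (real_of_int k) ^ 3)
        - x * ((real d)\<^sup>2 * sqrt (real d * x))\<bar>
     \<le> x * (C1 * real d powr (7/2) * x powr (-1/2) + C2 * (real d)\<^sup>2)"
proof (intro exI allI impI)
  fix d :: nat and x :: real
  assume x: "0 < x" and dx: "real d \<le> x"
  show "\<bar>(\<Sum>k\<in>{K d x - int d<..K d x}. (real_of_int k) ^ 3)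
        - x * ((real d)\<^sup>2 * sqrt (real d * x))\<bar>
     \<le> x * (2 * real d powr (7/2) * x powr (-1/2) + 6 * (real d)\<^sup>2)"
  proof (cases "d = 0")
    case True
    then show ?thesis by simp
  next
    case False
    then have d1: "real d \<ge> 1" by simp
    define D where "D = real d"
    define u where "u = sqrt (D * x)"
    define m where "m = sqrt (D^2/4 + D * x)"
    have x1: "x \<ge> 1" using d1 dx by simp
    have Dx1: "D * x \<ge> 1" using d1 x1 D_def by (metis mult_mono' mult_1 zero_le_one order_trans)
    have u1: "u \<ge> 1" unfolding u_def using Dx1 by simp
    have u2: "u^2 = D * x" unfolding u_def using Dx1 by simp
    have D0: "D \<ge> 0" using D_def by simp
    have mpos: "0 \<le> D^2/4 + D*x" using D0 x by (intro add_nonneg_nonneg) auto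
    have m2: "m^2 = D^2/4 + D*x" unfolding m_def using mpos by simp
    have m0: "m \<ge> 0" unfolding m_def using mpos by simp
    have mu: "m \<ge> u" unfolding m_def u_def by (simp add: real_sqrt_le_iff)
    have DD: "D^2 \<le> D * x" using dx d1 D_def by (simp add: power2_eq_square)
    have m15: "m \<le> 3/2 * u"
    proof -
      have "(3/2*u)^2 = 9/4 * u^2" by (simp add: power2_eq_square)
      then have "m^2 \<le> (3/2*u)^2" using m2 u2 DD Dx1 by linarith
      then show ?thesis using m0 u1 by (simp add: power2_le_iff_abs_le)
    qed
    have s: "sqrt ((real d)\<^sup>2 + 4 * real d * x) = 2 * m"
    proof -
      have "(real d)\<^sup>2 + 4 * real d * x = 4 * (D^2/4 + D*x)" by (simp add: D_def)
      then have "sqrt ((real d)\<^sup>2 + 4 * real d * x) = sqrt 4 * sqrt (D^2/4 + D*x)"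
        by (simp only: real_sqrt_mult)
      then show ?thesis unfolding m_def by simp
    qed
    define c where "c = K d x - int d"
    have Kf: "K d x = \<lfloor>D/2 + m\<rfloor>" unfolding K_def s D_def by (simp add: add_divide_distrib)
    define a where "a = real_of_int c + (D + 1)/2"
    have am: "\<bar>a - m\<bar> \<le> 1/2"
    proof -
      have "real_of_int (K d x) \<le> D/2 + m" "D/2 + m < real_of_int (K d x) + 1"
        unfolding Kf by linarith+
      then show ?thesis unfolding a_def c_def D_def abs_le_iff of_int_diff of_int_of_nat_eq by (intro conjI) (simp_all add: field_simps)
    qed
    have aa: "\<bar>a\<bar> \<le> 2 * u" using am m15 u1 m0 by linarith
    have set_eq: "{K d x - int d<..K d x} = {c<..c + int d}" unfolding c_def by simp
    have S: "(\<Sum>k\<in>{K d x - int d<..K d x}. (real_of_int k) ^ 3) = D * a^3 + a * D * (D^2 - 1)/4"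
      unfolding set_eq sum_cubes a_def D_def by simp
    have main: "x * ((real d)\<^sup>2 * sqrt (real d * x)) = D * u^3"
      using u2 unfolding D_def u_def by (simp add: power3_eq_cube power2_eq_square)
    have R: "x * (2 * real d powr (7/2) * x powr (-1/2) + 6 * (real d)\<^sup>2) = 2 * D^3 * u + 6 * D * u^2"
      using rhs_eq[OF x, of 2 d 6] u2 unfolding D_def u_def by (simp add: power2_eq_square)
    have mmu: "(m - u) * (m + u) = D^2/4" using m2 u2 by (simp add: algebra_simps power2_eq_square)
    have mu1: "m - u \<le> D^2/(8*u)"
    proof -
      have "(m - u) * (2*u) \<le> (m-u)*(m+u)" using mu by (intro mult_left_mono) auto
      then have "(m-u)*(2*u) \<le> D^2/4" using mmu by simp
      then show ?thesis using u1 by (simp add: field_simps)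
    qed
    have q: "m^2 + m*u + u^2 \<le> 15/4 * u^2"
    proof -
      have "m*u \<le> m*m" using mu m0 by (intro mult_left_mono) auto
      have "u^2 \<le> m^2" using mu u1 by (simp add: power_mono)
      show ?thesis using \<open>m*u \<le> m*m\<close> \<open>u^2 \<le> m^2\<close> m2 u2 DD unfolding power2_eq_square by linarith
    qed
    have b1: "m^3 - u^3 \<le> D^2 * u"
    proof -
      have "m^3 - u^3 = (m - u) * (m^2 + m*u + u^2)" by (simp add: algebra_simps power2_eq_square power3_eq_cube)
      also have "\<dots> \<le> D^2/(8*u) * (15/4*u^2)"
      proof (rule mult_mono[OF mu1 q])
        show "0 \<le> D^2/(8*u)" using u1 by simp
        show "0 \<le> m^2 + m*u + u^2" using m0 u1 by simp
      qed
      also have "\<dots> = 15/32 * D^2 * u" using u1 by (simp add: field_simps power2_eq_square)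
      also have "\<dots> \<le> D^2 * u" using u1 by simp
      finally show ?thesis .
    qed
    have b1': "m^3 - u^3 \<ge> 0" using mu u1 by (simp add: power_mono)
    have b2: "\<bar>a^3 - m^3\<bar> \<le> 6 * u^2"
    proof -
      have f: "a^3 - m^3 = (a - m) * (a^2 + a*m + m^2)"
        by (simp add: algebra_simps power2_eq_square power3_eq_cube)
      have g: "\<bar>a^2 + a*m + m^2\<bar> \<le> 12 * u^2"
      proof -
        have "\<bar>a^2 + a*m + m^2\<bar> \<le> \<bar>a^2\<bar> + \<bar>a*m\<bar> + \<bar>m^2\<bar>"
          by (rule order_trans[OF abs_triangle_ineq add_right_mono[OF abs_triangle_ineq]])
        also have "\<dots> = \<bar>a\<bar>*\<bar>a\<bar> + \<bar>a\<bar>*\<bar>m\<bar> + \<bar>m\<bar>*\<bar>m\<bar>"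
          by (simp only: abs_mult power2_eq_square)
        also have "\<dots> \<le> (2*u)*(2*u) + (2*u)*(2*u) + (2*u)*(2*u)"
          using aa m15 m0 u1 by (intro add_mono mult_mono) auto
        finally show ?thesis by (simp add: power2_eq_square)
      qed
      have "\<bar>a^3 - m^3\<bar> = \<bar>a - m\<bar> * \<bar>a^2 + a*m + m^2\<bar>"
        unfolding f by (rule abs_mult)
      also have "\<dots> \<le> 1/2 * (12*u^2)"
        using am g by (intro mult_mono) auto
      finally show ?thesis by simp
    qed
    have b3: "\<bar>a * D * (D^2 - 1)/4\<bar> \<le> D^3 * u / 2"
    proof -
      have "\<bar>a * D * (D^2 - 1)/4\<bar> = \<bar>a\<bar> * (D * (D^2 - 1))/4"
        using d1 D_def by (simp add: abs_mult)
      also have "\<dots> \<le> (2*u) * (D * D^2)/4"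
        using aa d1 D_def by (intro divide_right_mono mult_mono) auto
      finally show ?thesis by (simp add: power2_eq_square power3_eq_cube)
    qed
    have e: "D * a^3 + a * D * (D^2 - 1)/4 - D * u^3 = D*(a^3-m^3) + D*(m^3-u^3) + a * D * (D^2 - 1)/4"
      by (simp add: algebra_simps)
    have "\<bar>D * a^3 + a * D * (D^2 - 1)/4 - D * u^3\<bar>
          \<le> \<bar>D*(a^3-m^3)\<bar> + \<bar>D*(m^3-u^3)\<bar> + \<bar>a * D * (D^2 - 1)/4\<bar>"
      unfolding e by (rule order_trans[OF abs_triangle_ineq add_right_mono[OF abs_triangle_ineq]])
    also have "\<dots> = D * \<bar>a^3 - m^3\<bar> + D * (m^3 - u^3) + \<bar>a * D * (D^2 - 1)/4\<bar>"
      using D0 b1' by (simp add: abs_mult)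
    also have "\<dots> \<le> D * (6*u^2) + D * (D^2 * u) + D^3*u/2"
      using b1 b2 b3 d1 D_def by (intro add_mono mult_left_mono) auto
    also have "\<dots> \<le> 2 * D^3 * u + 6 * D * u^2" using u1 d1 D_def by (simp add: power3_eq_cube power2_eq_square)
    finally show ?thesis using S main R by simp
  qed
qed

end
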